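(* Let $\mathcal{X}=\langle\mathsf{S},\mathsf{po},\mathsf{rf}\rangle$ be a $\textsf{VSC-read}$ instance and let $\langle\mathcal{X}',\mathsf{cap}',\mathsf{rf}'\rangle$ be the $\textsf{VCh-rf}$ instance constructed from it as described below. Then $\mathcal{X}$ is sequentially consistent if and only if $\langle\mathcal{X}',\mathsf{cap}',\mathsf{rf}'\rangle$ is consistent.
   Context: Channels and events. Each channel $\mathtt{ch}$ has a capacity $\mathsf{cap}(\mathtt{ch})\in\mathbb{N}$; $\mathtt{ch}$ is synchronous if $\mathsf{cap}(\mathtt{ch})=0$ and asynchronous otherwise. An event is a tuple $e=\langle id,\tau,\mathsf{op}(\mathtt{ch},\mathsf{val})\rangle$ with a unique identifier $id$, a thread $\tau$, an operation $\mathsf{op}\in\{\mathtt{snd},\mathtt{rcv}\}$, a channel $\mathtt{ch}$ and a value $\mathsf{val}$. An execution is a finite sequence $\sigma$ of distinct events. $\sigma$ is well-formed (w.r.t. $\mathsf{cap}$) if: (i) for every asynchronous $\mathtt{ch}$ and every prefix $\pi$ of $\sigma$, $R_\pi(\mathtt{ch})\le S_\pi(\mathtt{ch})\le R_\pi(\mathtt{ch})+\mathsf{cap}(\mathtt{ch})$, where $S_\pi(\mathtt{ch})$, $R_\pi(\mathtt{ch})$ are the numbers of send, resp. receive, events on $\mathtt{ch}$ in $\pi$; (ii) for every synchronous $\mathtt{ch}$, every send on $\mathtt{ch}$ is immediately followed in $\sigma$ by a receive on $\mathtt{ch}$ of a different thread, and every receive on $\mathtt{ch}$ is immediately preceded in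 $\sigma$ by a send on $\mathtt{ch}$ of a different thread; (iii) for every channel $\mathtt{ch}$ and every $i$, if $\sigma$ contains an $i$-th receive on $\mathtt{ch}$, then the $i$-th send on $\mathtt{ch}$ has the same value as it. The program order $\mathsf{po}_\sigma$ is the set of pairs $(e,f)$ with $e$ before $f$ in $\sigma$ and in the same thread; the reads-from relation $\mathsf{rf}_\sigma$ is the set of pairs $(s,r)$ such that for some channel $\mathtt{ch}$ and some $i$, $s$ is the $i$-th send and $r$ the $i$-th receive on $\mathtt{ch}$ in $\sigma$. An abstract execution is $\mathcal{X}=\langle \mathsf{S},\mathsf{po}\rangle$ where $\mathsf{S}$ is a finite set of events and $\mathsf{po}$ is a strict order that totally orders the events of each thread and relates no events of different threads. An instance of $\textsf{VCh-rf}$ is $\langle\mathcal{X},\mathsf{cap},\mathsf{rf}\rangle$ where $\mathsf{cap}$ is a capacity function on the channels occurring in $\mathsf{S}$ and $\mathsf{rf}$ is a set of pairs $(s,r)$ of a send and a receive event of $\mathsf{S}$ on the same channel; it is consistent if there is an execution $\sigma$ whose set of events is $\mathsf{S}$, with $\mathsf{po}_\sigma=\mathsf{po}$, $\sigma$ well-formed, and $\mathsf{rf}_\sigma=\mathsf{rf}$ (values are irrelevant here). $\textsf{VSC-read}$. An instance is $\langle\mathsf{S},\mathsf{po},\mathsf{rf}\rangle$ where $\mathsf{S}$ is a finite set of events of the form $\langle\tau,\mathsf{r}(x)\rangle$ (read of register $x$ by thread $\tau$) or $\langle\tau,\mathsf{w}(x)\rangle$ (write), $\mathsf{po}$ totally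 orders the events of each thread and relates no events of different threads, and $\mathsf{rf}$ maps each read to a write of the same register. It is sequentially consistent if there is a total order on $\mathsf{S}$ extending $\mathsf{po}$ such that for every $(w,r)\in\mathsf{rf}$ on register $x$, $w$ precedes $r$ and no other write to $x$ lies between $w$ and $r$. Construction. Let $\mathcal{R}$ be the set of registers. For a write $e$ let $p_e$ be the number of reads $f$ with $(e,f)\in\mathsf{rf}$, fix an arbitrary enumeration $f_1,\dots,f_{p_e}$ of them, and for $x\in\mathcal{R}$ let $m_x=\max\{p_e: e\text{ a write on }x\}$. $\mathcal{X}'$ has the same threads, channels $\{\mathtt{ch}_x^i: x\in\mathcal{R},1\le i\le m_x\}\cup\{\ell\}$, and $\mathsf{cap}'\equiv1$. Each $e\in\mathsf{S}$ of thread $\tau$ is replaced by a sequence $M(e)$ of fresh events of thread $\tau$: for a write $e$ on $x$, $M(e)=\mathtt{snd}(\ell)\cdot\mathtt{snd}(\mathtt{ch}_x^1)\cdots\mathtt{snd}(\mathtt{ch}_x^{m_x})\cdot\mathtt{rcv}(\mathtt{ch}_x^{p_e+1})\cdots\mathtt{rcv}(\mathtt{ch}_x^{m_x})\cdot\mathtt{rcv}(\ell)$; for the read $f_i$ (the $i$-th read of write $e$ on $x$), $M(f_i)=\mathtt{snd}(\ell)\cdot\mathtt{rcv}(\mathtt{ch}_x^i)\cdot\mathtt{rcv}(\ell)$. $\mathsf{S}'$ is the union of all events of all $M(e)$; $\mathsf{po}'$ orders events within each $M(e)$ by their position and orders all events of $M(e)$ before all events of $M(e')$ whenever $(e,e')\in\mathsf{po}$.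 $\mathsf{rf}'$: in each $M(e)$ the $\mathtt{rcv}(\ell)$ is matched with the $\mathtt{snd}(\ell)$ of the same $M(e)$; for each write $e$ and $1\le i\le p_e$, the $\mathtt{snd}(\mathtt{ch}_x^i)$ of $M(e)$ is matched with the $\mathtt{rcv}(\mathtt{ch}_x^i)$ of $M(f_i)$; for $p_e<j\le m_x$, the $\mathtt{snd}(\mathtt{ch}_x^j)$ of $M(e)$ is matched with the $\mathtt{rcv}(\mathtt{ch}_x^j)$ of $M(e)$. *)

theory Defs
  imports Main
begin

datatype 'x acc = Rd 'x | Wr 'x

fun is_wr :: "'x acc \<Rightarrow> bool" where
  "is_wr (Wr _) = True" | "is_wr (Rd _) = False"

fun regof :: "'x acc \<Rightarrow> 'x" where
  "regof (Wr x) = x" | "regof (Rd x) = x"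

definition vsc_instance ::
  "'e set \<Rightarrow> ('e \<times> 'e) set \<Rightarrow> ('e \<Rightarrow> 't) \<Rightarrow> ('e \<Rightarrow> 'x acc) \<Rightarrow> ('e \<Rightarrow> 'e) \<Rightarrow> bool" where
  "vsc_instance S po thr lab rf \<longleftrightarrow>
     finite S \<and> po \<subseteq> S \<times> S \<and> irrefl po \<and> trans po \<and>
     (\<forall>a\<in>S. \<forall>b\<in>S. a \<noteq> b \<and> thr a = thr b \<longrightarrow> (a, b) \<in> po \<or> (b, a) \<in> po) \<and>
     (\<forall>(a, b)\<in>po. thr a = thr b) \<and>
     (\<forall>r\<in>S. \<not> is_wr (lab r) \<longrightarrow>
        rf r \<in> S \<and> is_wr (lab (rf r)) \<and> regof (lab (rf r)) = regof (lab r))"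

definition before :: "'a list \<Rightarrow> 'a \<Rightarrow> 'a \<Rightarrow> bool" where
  "before \<sigma> a b \<longleftrightarrow> (\<exists>i j. i < j \<and> j < length \<sigma> \<and> \<sigma> ! i = a \<and> \<sigma> ! j = b)"

text \<open>A total order on S is represented by a duplicate-free list enumerating S.\<close>
definition seq_consistent ::
  "'e set \<Rightarrow> ('e \<times> 'e) set \<Rightarrow> ('e \<Rightarrow> 'x acc) \<Rightarrow> ('e \<Rightarrow> 'e) \<Rightarrow> bool" where
  "seq_consistent S po lab rf \<longleftrightarrow>
     (\<exists>\<sigma>. distinct \<sigma> \<and> set \<sigma> = S \<and>
        (\<forall>(a, b)\<in>po. before \<sigma> a b) \<and>
        (\<forall>r\<in>S. \<not> is_wr (lab r) \<longrightarrow>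
           before \<sigma> (rf r) r \<and>
           (\<forall>w\<in>S. is_wr (lab w) \<and> regof (lab w) = regof (lab r) \<and> w \<noteq> rf r \<longrightarrow>
              \<not> (before \<sigma> (rf r) w \<and> before \<sigma> w r))))"

datatype chop = Snd | Rcv

definition sends_on :: "('v \<Rightarrow> chop) \<Rightarrow> ('v \<Rightarrow> 'c) \<Rightarrow> 'c \<Rightarrow> 'v list \<Rightarrow> 'v list" where
  "sends_on op ch c \<sigma> = filter (\<lambda>e. op e = Snd \<and> ch e = c) \<sigma>"

definition rcvs_on :: "('v \<Rightarrow> chop) \<Rightarrow> ('v \<Rightarrow> 'c) \<Rightarrow> 'c \<Rightarrow> 'v list \<Rightarrow> 'v list" where
  "rcvs_on op ch c \<sigma> = filter (\<lambda>e. op e = Rcv \<and> ch e = c) \<sigma>"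

text \<open>Well-formedness conditions (i) and (ii); condition (iii) concerns values, which are
  irrelevant for VCh-rf and are not modelled.\<close>
definition well_formed ::
  "('c \<Rightarrow> nat) \<Rightarrow> ('v \<Rightarrow> 't) \<Rightarrow> ('v \<Rightarrow> chop) \<Rightarrow> ('v \<Rightarrow> 'c) \<Rightarrow> 'v list \<Rightarrow> bool" where
  "well_formed cap thr op ch \<sigma> \<longleftrightarrow>
     (\<forall>c n. 0 < cap c \<longrightarrow> n \<le> length \<sigma> \<longrightarrow>
        length (rcvs_on op ch c (take n \<sigma>)) \<le> length (sends_on op ch c (take n \<sigma>)) \<and>
        length (sends_on op ch c (take n \<sigma>)) \<le> length (rcvs_on op ch c (take n \<sigma>)) + cap c) \<and>
     (\<forall>i < length \<sigma>. cap (ch (\<sigma> ! i)) = 0 \<longrightarrow>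
        (op (\<sigma> ! i) = Snd \<longrightarrow> Suc i < length \<sigma> \<and> op (\<sigma> ! Suc i) = Rcv \<and>
            ch (\<sigma> ! Suc i) = ch (\<sigma> ! i) \<and> thr (\<sigma> ! Suc i) \<noteq> thr (\<sigma> ! i)) \<and>
        (op (\<sigma> ! i) = Rcv \<longrightarrow> 0 < i \<and> op (\<sigma> ! (i - 1)) = Snd \<and>
            ch (\<sigma> ! (i - 1)) = ch (\<sigma> ! i) \<and> thr (\<sigma> ! (i - 1)) \<noteq> thr (\<sigma> ! i)))"

definition po_of :: "('v \<Rightarrow> 't) \<Rightarrow> 'v list \<Rightarrow> ('v \<times> 'v) set" where
  "po_of thr \<sigma> = {(\<sigma> ! i, \<sigma> ! j) | i j. i < j \<and> j < length \<sigma> \<and> thr (\<sigma> ! i) = thr (\<sigma> ! j)}"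

definition rf_of :: "('v \<Rightarrow> chop) \<Rightarrow> ('v \<Rightarrow> 'c) \<Rightarrow> 'v list \<Rightarrow> ('v \<times> 'v) set" where
  "rf_of op ch \<sigma> = {(s, r). \<exists>c i. i < length (sends_on op ch c \<sigma>) \<and> i < length (rcvs_on op ch c \<sigma>) \<and>
      sends_on op ch c \<sigma> ! i = s \<and> rcvs_on op ch c \<sigma> ! i = r}"

definition vch_consistent ::
  "'v set \<Rightarrow> ('v \<times> 'v) set \<Rightarrow> ('c \<Rightarrow> nat) \<Rightarrow> ('v \<Rightarrow> 't) \<Rightarrow> ('v \<Rightarrow> chop) \<Rightarrow> ('v \<Rightarrow> 'c)
     \<Rightarrow> ('v \<times> 'v) set \<Rightarrow> bool" where
  "vch_consistent S po cap thr op ch rf \<longleftrightarrow>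
     (\<exists>\<sigma>. distinct \<sigma> \<and> set \<sigma> = S \<and> po_of thr \<sigma> = po \<and> well_formed cap thr op ch \<sigma> \<and>
          rf_of op ch \<sigma> = rf)"

datatype 'x chan = Lch | Cch 'x nat

definition readers :: "'e set \<Rightarrow> ('e \<Rightarrow> 'x acc) \<Rightarrow> ('e \<Rightarrow> 'e) \<Rightarrow> 'e \<Rightarrow> 'e set" where
  "readers S lab rf w = {r \<in> S. \<not> is_wr (lab r) \<and> rf r = w}"

definition mreg :: "'e set \<Rightarrow> ('e \<Rightarrow> 'x acc) \<Rightarrow> ('e \<Rightarrow> 'e) \<Rightarrow> 'x \<Rightarrow> nat" where
  "mreg S lab rf x = Max (insert 0 {card (readers S lab rf w) | w. w \<in> S \<and> lab w = Wr x})"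

text \<open>idx r = i means r is the i-th read f_i of its write; it enumerates the readers of
  every write w as 1..p_w.\<close>
definition valid_enum :: "'e set \<Rightarrow> ('e \<Rightarrow> 'x acc) \<Rightarrow> ('e \<Rightarrow> 'e) \<Rightarrow> ('e \<Rightarrow> nat) \<Rightarrow> bool" where
  "valid_enum S lab rf idx \<longleftrightarrow>
     (\<forall>w\<in>S. is_wr (lab w) \<longrightarrow>
        bij_betw idx (readers S lab rf w) {1..card (readers S lab rf w)})"

definition Mseq ::
  "'e set \<Rightarrow> ('e \<Rightarrow> 'x acc) \<Rightarrow> ('e \<Rightarrow> 'e) \<Rightarrow> ('e \<Rightarrow> nat) \<Rightarrow> 'e \<Rightarrow> (chop \<times> 'x chan) list" where
  "Mseq S lab rf idx e =
     (case lab e of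
        Wr x \<Rightarrow>
          [(Snd, Lch)] @ map (\<lambda>j. (Snd, Cch x j)) [1..<mreg S lab rf x + 1]
          @ map (\<lambda>j. (Rcv, Cch x j)) [card (readers S lab rf e) + 1..<mreg S lab rf x + 1]
          @ [(Rcv, Lch)]
      | Rd x \<Rightarrow> [(Snd, Lch), (Rcv, Cch x (idx e)), (Rcv, Lch)])"

text \<open>Event (e,k) is the k-th (0-based) event of M(e).\<close>
definition S' :: "'e set \<Rightarrow> ('e \<Rightarrow> 'x acc) \<Rightarrow> ('e \<Rightarrow> 'e) \<Rightarrow> ('e \<Rightarrow> nat) \<Rightarrow> ('e \<times> nat) set" where
  "S' S lab rf idx = {(e, k). e \<in> S \<and> k < length (Mseq S lab rf idx e)}"

definition thr' :: "('e \<Rightarrow> 't) \<Rightarrow> 'e \<times> nat \<Rightarrow> 't" where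
  "thr' thr v = thr (fst v)"

definition op' :: "'e set \<Rightarrow> ('e \<Rightarrow> 'x acc) \<Rightarrow> ('e \<Rightarrow> 'e) \<Rightarrow> ('e \<Rightarrow> nat) \<Rightarrow> 'e \<times> nat \<Rightarrow> chop" where
  "op' S lab rf idx v = fst (Mseq S lab rf idx (fst v) ! snd v)"

definition ch' :: "'e set \<Rightarrow> ('e \<Rightarrow> 'x acc) \<Rightarrow> ('e \<Rightarrow> 'e) \<Rightarrow> ('e \<Rightarrow> nat) \<Rightarrow> 'e \<times> nat \<Rightarrow> 'x chan" where
  "ch' S lab rf idx v = snd (Mseq S lab rf idx (fst v) ! snd v)"

definition po' ::
  "'e set \<Rightarrow> ('e \<times> 'e) set \<Rightarrow> ('e \<Rightarrow> 'x acc) \<Rightarrow> ('e \<Rightarrow> 'e) \<Rightarrow> ('e \<Rightarrow> nat) \<Rightarrow> (('e \<times> nat) \<times> ('e \<times> nat)) set" where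
  "po' S po lab rf idx =
     {((e, k), (e', k')). (e, k) \<in> S' S lab rf idx \<and> (e', k') \<in> S' S lab rf idx \<and>
        ((e = e' \<and> k < k') \<or> (e, e') \<in> po)}"

definition rf' ::
  "'e set \<Rightarrow> ('e \<Rightarrow> 'x acc) \<Rightarrow> ('e \<Rightarrow> 'e) \<Rightarrow> ('e \<Rightarrow> nat) \<Rightarrow> (('e \<times> nat) \<times> ('e \<times> nat)) set" where
  "rf' S lab rf idx =
     {((e, 0), (e, length (Mseq S lab rf idx e) - 1)) | e. e \<in> S}
     \<union> {((w, idx r), (r, 1)) | w r. w \<in> S \<and> is_wr (lab w) \<and> r \<in> readers S lab rf w}
     \<union> {((w, j), (w, mreg S lab rf x + j - card (readers S lab rf w))) | w x j.
          w \<in> S \<and> lab w = Wr x \<and> card (readers S lab rf w) < j \<and> j \<le> mreg S lab rf x}"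

end

theory Submission
  imports Defs
begin


lemma before_Nil[simp]: "\<not> before [] a b"
  by (simp add: before_def)

lemma before_Cons: "before (x#xs) a b \<longleftrightarrow> (x = a \<and> b \<in> set xs) \<or> before xs a b"
proof
  assume "before (x#xs) a b"
  then obtain i j where ij: "i < j" "j < length (x#xs)" "(x#xs)!i = a" "(x#xs)!j = b"
    by (auto simp: before_def)
  show "(x = a \<and> b \<in> set xs) \<or> before xs a b"
  proof (cases i)
    case 0
    then obtain j' where "j = Suc j'" using ij by (cases j) auto
    then show ?thesis using ij 0 by (auto simp: in_set_conv_nth)
  next
    case (Suc i')
    then obtain j' where "j = Suc j'" using ij by (cases j) auto
    then have "before xs a b" using ij Suc unfolding before_def
      by (intro exI[of _ i'] exI[of _ j']) auto
    then show ?thesis by blast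
  qed
next
  assume "(x = a \<and> b \<in> set xs) \<or> before xs a b"
  then show "before (x#xs) a b"
  proof
    assume "x = a \<and> b \<in> set xs"
    then obtain j where "j < length xs" "xs!j = b" "x = a" by (auto simp: in_set_conv_nth)
    then show ?thesis unfolding before_def by (intro exI[of _ 0] exI[of _ "Suc j"]) auto
  next
    assume "before xs a b"
    then obtain i j where "i < j" "j < length xs" "xs!i = a" "xs!j = b" by (auto simp: before_def)
    then show ?thesis unfolding before_def by (intro exI[of _ "Suc i"] exI[of _ "Suc j"]) auto
  qed
qed

lemma before_set: "before xs a b \<Longrightarrow> a \<in> set xs \<and> b \<in> set xs"
  by (induction xs) (auto simp: before_Cons)

lemma before_irrefl: "distinct xs \<Longrightarrow> \<not> before xs a a"
  by (induction xs) (auto simp: before_Cons dest: before_set)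

lemma before_asym: "distinct xs \<Longrightarrow> before xs a b \<Longrightarrow> \<not> before xs b a"
  by (induction xs) (auto simp: before_Cons dest: before_set)

lemma before_trans: "distinct xs \<Longrightarrow> before xs a b \<Longrightarrow> before xs b c \<Longrightarrow> before xs a c"
  by (induction xs) (auto simp: before_Cons dest: before_set)

lemma before_total: "a \<in> set xs \<Longrightarrow> b \<in> set xs \<Longrightarrow> a \<noteq> b \<Longrightarrow> before xs a b \<or> before xs b a"
  by (induction xs) (auto simp: before_Cons)

lemma before_filter: "before (filter P xs) a b \<longleftrightarrow> before xs a b \<and> P a \<and> P b"
  by (induction xs) (auto simp: before_Cons dest: before_set)

lemma before_map_inj: "inj f \<Longrightarrow> before (map f xs) (f a) (f b) \<longleftrightarrow> before xs a b"
  by (induction xs) (auto simp: before_Cons inj_eq inj_image_mem_iff)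

lemma before_append: "before (xs @ ys) a b \<longleftrightarrow> before xs a b \<or> (a \<in> set xs \<and> b \<in> set ys) \<or> before ys a b"
  by (induction xs) (auto simp: before_Cons)

lemma before_nth: "distinct xs \<Longrightarrow> i < length xs \<Longrightarrow> j < length xs \<Longrightarrow>
   before xs (xs!i) (xs!j) \<longleftrightarrow> i < j"
  unfolding before_def using nth_eq_iff_index_eq by (metis order.strict_trans)

lemma po_of_before: "po_of thr \<sigma> = {(a,b). before \<sigma> a b \<and> thr a = thr b}"
  unfolding po_of_def before_def by blast

inductive alt :: "('v \<Rightarrow> chop) \<Rightarrow> 'v list \<Rightarrow> bool" for op where
  alt0: "alt op []"
| alt1: "op a = Snd \<Longrightarrow> alt op [a]"
| alt2: "op a = Snd \<Longrightarrow> op b = Rcv \<Longrightarrow> alt op xs \<Longrightarrow> alt op (a#b#xs)"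

definition cS where "cS op xs = length (filter (\<lambda>e. op e = Snd) xs)"
definition cR where "cR op xs = length (filter (\<lambda>e. op e = Rcv) xs)"

lemma alt_counts: "alt op L \<Longrightarrow> cR op (take m L) \<le> cS op (take m L) \<and> cS op (take m L) \<le> cR op (take m L) + 1"
proof (induction arbitrary: m rule: alt.induct)
  case alt0 then show ?case by (simp add: cS_def cR_def)
next
  case (alt1 a) then show ?case by (cases m) (auto simp: cS_def cR_def)
next
  case (alt2 a b xs)
  show ?case
  proof (cases m)
    case 0 then show ?thesis by (simp add: cS_def cR_def)
  next
    case (Suc m1)
    then show ?thesis
    proof (cases m1)
      case 0 then show ?thesis using Suc alt2 by (simp add: cS_def cR_def)
    next
      case (Suc m2)
      then show ?thesis using \<open>m = Suc m1\<close> alt2 alt2.IH[of m2] by (simp add: cS_def cR_def)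
    qed
  qed
qed

lemma chop_cases: "x = Rcv \<longleftrightarrow> x \<noteq> Snd"
  by (cases x) auto

lemma counts_alt: "(\<forall>m. cR op (take m L) \<le> cS op (take m L) \<and> cS op (take m L) \<le> cR op (take m L) + 1) \<Longrightarrow> alt op L"
proof (induction L rule: induct_list012)
  case 1 then show ?case by (simp add: alt.alt0)
next
  case (2 x)
  from "2"[rule_format, of 1] have "op x = Snd" by (cases "op x") (auto simp: cS_def cR_def)
  then show ?case by (rule alt.alt1)
next
  case (3 x y zs)
  from "3.prems"[rule_format, of 1] have x: "op x = Snd" by (cases "op x") (auto simp: cS_def cR_def)
  from "3.prems"[rule_format, of 2] x have y: "op y = Rcv" by (cases "op y") (auto simp: cS_def cR_def)
  have "alt op zs"
  proof (rule "3.IH"(1), rule allI)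
    fix m
    from "3.prems"[rule_format, of "Suc (Suc m)"] x y
    show "cR op (take m zs) \<le> cS op (take m zs) \<and> cS op (take m zs) \<le> cR op (take m zs) + 1"
      by (simp add: cS_def cR_def)
  qed
  then show ?case using x y by (simp add: alt.alt2)
qed

lemma alt_nth: "alt op L \<Longrightarrow> k < length L \<Longrightarrow> op (L!k) = (if even k then Snd else Rcv)"
proof (induction arbitrary: k rule: alt.induct)
  case (alt2 a b xs)
  then show ?case
    by (cases k; cases "k - 1") auto
qed auto

lemma alt_zip: "alt op L \<Longrightarrow>
  (s, r) \<in> set (zip (filter (\<lambda>e. op e = Snd) L) (filter (\<lambda>e. op e = Rcv) L)) \<longleftrightarrow>
  (\<exists>k. even k \<and> Suc k < length L \<and> L!k = s \<and> L!Suc k = r)"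
proof (induction rule: alt.induct)
  case (alt2 a b xs)
  have "(\<exists>k. even k \<and> Suc k < length (a#b#xs) \<and> (a#b#xs)!k = s \<and> (a#b#xs)!Suc k = r) \<longleftrightarrow>
        (a = s \<and> b = r) \<or> (\<exists>k. even k \<and> Suc k < length xs \<and> xs!k = s \<and> xs!Suc k = r)"
  proof
    assume "\<exists>k. even k \<and> Suc k < length (a#b#xs) \<and> (a#b#xs)!k = s \<and> (a#b#xs)!Suc k = r"
    then obtain k where k: "even k" "Suc k < length (a#b#xs)" "(a#b#xs)!k = s" "(a#b#xs)!Suc k = r" by blast
    show "(a = s \<and> b = r) \<or> (\<exists>k. even k \<and> Suc k < length xs \<and> xs!k = s \<and> xs!Suc k = r)"
    proof (cases k)
      case 0 then show ?thesis using k by auto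
    next
      case (Suc k1)
      then obtain k2 where "k1 = Suc k2" using k by (cases k1) auto
      then show ?thesis using k Suc by (intro disjI2 exI[of _ k2]) auto
    qed
  next
    assume "(a = s \<and> b = r) \<or> (\<exists>k. even k \<and> Suc k < length xs \<and> xs!k = s \<and> xs!Suc k = r)"
    then show "\<exists>k. even k \<and> Suc k < length (a#b#xs) \<and> (a#b#xs)!k = s \<and> (a#b#xs)!Suc k = r"
    proof
      assume "a = s \<and> b = r" then show ?thesis by (intro exI[of _ 0]) auto
    next
      assume "\<exists>k. even k \<and> Suc k < length xs \<and> xs!k = s \<and> xs!Suc k = r"
      then obtain k where "even k \<and> Suc k < length xs \<and> xs!k = s \<and> xs!Suc k = r" by blast
      then show ?thesis by (intro exI[of _ "Suc (Suc k)"]) auto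
    qed
  qed
  moreover have Z: "zip (filter (\<lambda>e. op e = Snd) (a#b#xs)) (filter (\<lambda>e. op e = Rcv) (a#b#xs)) =
     (a, b) # zip (filter (\<lambda>e. op e = Snd) xs) (filter (\<lambda>e. op e = Rcv) xs)"
    using alt2.hyps(1,2) by simp
  moreover have "(s, r) \<in> set ((a, b) # zip (filter (\<lambda>e. op e = Snd) xs) (filter (\<lambda>e. op e = Rcv) xs))
     \<longleftrightarrow> (a = s \<and> b = r) \<or> (s, r) \<in> set (zip (filter (\<lambda>e. op e = Snd) xs) (filter (\<lambda>e. op e = Rcv) xs))"
    by auto
  ultimately show ?case using alt2.IH by metis
next
  case alt0 then show ?case by simp
next
  case (alt1 a) then show ?case by simp
qed


lemma take_filter_ex: "m \<le> length (filter P xs) \<Longrightarrow> \<exists>n \<le> length xs. filter P (take n xs) = take m (filter P xs)"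
proof (induction xs arbitrary: m)
  case Nil then show ?case by simp
next
  case (Cons x xs)
  show ?case
  proof (cases "m = 0")
    case True then show ?thesis by (intro exI[of _ 0]) auto
  next
    case False
    show ?thesis
    proof (cases "P x")
      case True
      with Cons.prems have "m - 1 \<le> length (filter P xs)" by auto
      then obtain n where "n \<le> length xs" "filter P (take n xs) = take (m - 1) (filter P xs)"
        using Cons.IH[of "m - 1"] by auto
      then show ?thesis using True False by (intro exI[of _ "Suc n"]) (cases m, auto)
    next
      case False
      with Cons.prems obtain n where "n \<le> length xs" "filter P (take n xs) = take m (filter P xs)"
        using Cons.IH[of m] by auto
      then show ?thesis using False by (intro exI[of _ "Suc n"]) auto
    qed
  qed
qed

lemma filter_take_ex: "\<exists>m. filter P (take n xs) = take m (filter P xs)"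
proof -
  have "filter P xs = filter P (take n xs) @ filter P (drop n xs)"
    by (metis append_take_drop_id filter_append)
  then show ?thesis by (metis append_eq_conv_conj)
qed

lemma sends_on_L: "sends_on op ch c xs = filter (\<lambda>e. op e = Snd) (filter (\<lambda>v. ch v = c) xs)"
  by (simp add: sends_on_def filter_filter conj_commute)
lemma rcvs_on_L: "rcvs_on op ch c xs = filter (\<lambda>e. op e = Rcv) (filter (\<lambda>v. ch v = c) xs)"
  by (simp add: rcvs_on_def filter_filter conj_commute)

lemma WF_iff: "well_formed (\<lambda>_. 1) thr op ch \<sigma> \<longleftrightarrow> (\<forall>c. alt op (filter (\<lambda>v. ch v = c) \<sigma>))"
proof
  assume wf: "well_formed (\<lambda>_. 1) thr op ch \<sigma>"
  show "\<forall>c. alt op (filter (\<lambda>v. ch v = c) \<sigma>)"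
  proof
    fix c
    show "alt op (filter (\<lambda>v. ch v = c) \<sigma>)"
    proof (rule counts_alt, rule allI)
      fix m
      let ?L = "filter (\<lambda>v. ch v = c) \<sigma>"
      obtain n where n: "n \<le> length \<sigma>" "filter (\<lambda>v. ch v = c) (take n \<sigma>) = take (min m (length ?L)) ?L"
        using take_filter_ex[of "min m (length ?L)" "\<lambda>v. ch v = c" \<sigma>] by auto
      have tk: "take m ?L = take (min m (length ?L)) ?L" by (simp add: min_def)
      from wf n(1) have "length (rcvs_on op ch c (take n \<sigma>)) \<le> length (sends_on op ch c (take n \<sigma>)) \<and>
        length (sends_on op ch c (take n \<sigma>)) \<le> length (rcvs_on op ch c (take n \<sigma>)) + 1"
        unfolding well_formed_def by auto
      then show "cR op (take m ?L) \<le> cS op (take m ?L) \<and> cS op (take m ?L) \<le> cR op (take m ?L) + 1"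
        unfolding tk cS_def cR_def sends_on_L rcvs_on_L n(2) .
    qed
  qed
next
  assume A: "\<forall>c. alt op (filter (\<lambda>v. ch v = c) \<sigma>)"
  have "\<forall>c n. length (rcvs_on op ch c (take n \<sigma>)) \<le> length (sends_on op ch c (take n \<sigma>)) \<and>
        length (sends_on op ch c (take n \<sigma>)) \<le> length (rcvs_on op ch c (take n \<sigma>)) + 1"
  proof (intro allI)
    fix c n
    obtain m where "filter (\<lambda>v. ch v = c) (take n \<sigma>) = take m (filter (\<lambda>v. ch v = c) \<sigma>)"
      using filter_take_ex by blast
    then show "length (rcvs_on op ch c (take n \<sigma>)) \<le> length (sends_on op ch c (take n \<sigma>)) \<and>
        length (sends_on op ch c (take n \<sigma>)) \<le> length (rcvs_on op ch c (take n \<sigma>)) + 1"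
      using alt_counts[OF A[rule_format, of c], of m] by (simp add: sends_on_L rcvs_on_L cS_def cR_def)
  qed
  then show "well_formed (\<lambda>_. 1) thr op ch \<sigma>" unfolding well_formed_def by auto
qed



lemma mem_zip_iff: "(s, r) \<in> set (zip xs ys) \<longleftrightarrow> (\<exists>i. i < length xs \<and> i < length ys \<and> xs!i = s \<and> ys!i = r)"
  by (auto simp: set_zip)

lemma rf_of_alt: "\<forall>c. alt op (filter (\<lambda>v. ch v = c) \<sigma>) \<Longrightarrow>
  (s, r) \<in> rf_of op ch \<sigma> \<longleftrightarrow> (\<exists>c k. even k \<and> Suc k < length (filter (\<lambda>v. ch v = c) \<sigma>) \<and>
     filter (\<lambda>v. ch v = c) \<sigma> ! k = s \<and> filter (\<lambda>v. ch v = c) \<sigma> ! Suc k = r)"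
proof -
  assume A: "\<forall>c. alt op (filter (\<lambda>v. ch v = c) \<sigma>)"
  have "(s, r) \<in> rf_of op ch \<sigma> \<longleftrightarrow> (\<exists>c. (s, r) \<in> set (zip (sends_on op ch c \<sigma>) (rcvs_on op ch c \<sigma>)))"
    by (simp add: rf_of_def mem_zip_iff)
  also have "\<dots> \<longleftrightarrow> (\<exists>c k. even k \<and> Suc k < length (filter (\<lambda>v. ch v = c) \<sigma>) \<and>
     filter (\<lambda>v. ch v = c) \<sigma> ! k = s \<and> filter (\<lambda>v. ch v = c) \<sigma> ! Suc k = r)"
    using alt_zip[OF A[rule_format]] by (simp add: sends_on_L rcvs_on_L)
  finally show ?thesis .
qed

lemma G1:
  assumes d: "distinct \<sigma>" and wf: "well_formed (\<lambda>_. 1) thr op ch \<sigma>" and sr: "(s, r) \<in> rf_of op ch \<sigma>"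
  shows "op s = Snd \<and> op r = Rcv \<and> ch s = ch r \<and> before \<sigma> s r \<and>
         (\<forall>v. ch v = ch s \<longrightarrow> \<not> (before \<sigma> s v \<and> before \<sigma> v r))"
proof -
  have A: "\<forall>c. alt op (filter (\<lambda>v. ch v = c) \<sigma>)" using WF_iff[THEN iffD1, OF wf] .
  have "\<exists>c k. even k \<and> Suc k < length (filter (\<lambda>v. ch v = c) \<sigma>) \<and>
     filter (\<lambda>v. ch v = c) \<sigma> ! k = s \<and> filter (\<lambda>v. ch v = c) \<sigma> ! Suc k = r"
    using sr rf_of_alt[OF A] by simp
  then obtain c k where k: "even k" "Suc k < length (filter (\<lambda>v. ch v = c) \<sigma>)"
     "filter (\<lambda>v. ch v = c) \<sigma> ! k = s" "filter (\<lambda>v. ch v = c) \<sigma> ! Suc k = r"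
    by blast
  define L where "L = filter (\<lambda>v. ch v = c) \<sigma>"
  have dL: "distinct L" using d by (simp add: L_def)
  have k': "even k" "Suc k < length L" "L!k = s" "L!Suc k = r" using k unfolding L_def by auto
  have AL: "alt op L" using A by (simp add: L_def)
  have ops: "op s = Snd" "op r = Rcv"
    using alt_nth[OF AL, of k] alt_nth[OF AL, of "Suc k"] k' by auto
  have "s \<in> set L" using k' nth_mem[of k L] by simp
  moreover have "r \<in> set L" using k' nth_mem[of "Suc k" L] by simp
  ultimately have chs: "ch s = c" "ch r = c" by (simp_all add: L_def)
  have bL: "before L s r" using before_nth[OF dL, of k "Suc k"] k' by simp
  then have b: "before \<sigma> s r" by (simp add: L_def before_filter)
  have nb: "\<not> (before \<sigma> s v \<and> before \<sigma> v r)" if "ch v = ch s" for v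
  proof
    assume "before \<sigma> s v \<and> before \<sigma> v r"
    then have b1: "before L s v" "before L v r" using that chs by (simp_all add: L_def before_filter)
    then have "v \<in> set L" using before_set[OF b1(1)] by simp
    then obtain j where j: "j < length L" "L!j = v" by (auto simp: in_set_conv_nth)
    have "k < j" using before_nth[OF dL, of k j] k' j b1 by simp
    moreover have "j < Suc k" using before_nth[OF dL, of j "Suc k"] k' j b1 by simp
    ultimately show False by simp
  qed
  show ?thesis using ops chs b nb by simp
qed

lemma adj_filter:
  assumes d: "distinct \<sigma>" and "P s" "P r" "before \<sigma> s r"
    and nb: "\<forall>v. P v \<longrightarrow> \<not> (before \<sigma> s v \<and> before \<sigma> v r)"
  shows "\<exists>k. Suc k < length (filter P \<sigma>) \<and> filter P \<sigma> ! k = s \<and> filter P \<sigma> ! Suc k = r"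
proof -
  define L where "L = filter P \<sigma>"
  have dL: "distinct L" using d by (simp add: L_def)
  have bL: "before L s r" using assms by (simp add: L_def before_filter)
  then obtain i j where ij: "i < length L" "j < length L" "L!i = s" "L!j = r"
    using before_set by (metis in_set_conv_nth)
  have "i < j" using before_nth[OF dL ij(1,2)] ij bL by simp
  moreover have "\<not> Suc i < j"
  proof
    assume a: "Suc i < j"
    let ?v = "L ! Suc i"
    have "before L s ?v" "before L ?v r" using before_nth[OF dL] ij a by auto
    then have "P ?v" "before \<sigma> s ?v" "before \<sigma> ?v r" by (auto simp: L_def before_filter)
    then show False using nb by blast
  qed
  ultimately have "j = Suc i" by simp
  then show ?thesis using ij by (auto simp: L_def)
qed


lemma P_alt: "\<forall>k<length L. (op (L!k) = Snd \<longrightarrow> Suc k < length L \<and> op (L!Suc k) = Rcv) \<and>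
     (op (L!k) = Rcv \<longrightarrow> 0 < k \<and> op (L!(k-1)) = Snd) \<Longrightarrow> alt op L"
proof (induction L rule: induct_list012)
  case 1 then show ?case by (simp add: alt.alt0)
next
  case (2 x)
  from "2"[rule_format, of 0] have "op x = Snd" by (cases "op x") auto
  then show ?case by (simp add: alt.alt1)
next
  case (3 x y zs)
  from "3.prems"[rule_format, of 0] have x: "op x = Snd" by (cases "op x") auto
  from "3.prems"[rule_format, of 0] x have y: "op y = Rcv" by simp
  have "alt op zs"
  proof (rule "3.IH"(1), intro allI impI conjI)
    fix k assume k: "k < length zs"
    have P: "(op ((x#y#zs)!Suc (Suc k)) = Snd \<longrightarrow> Suc (Suc (Suc k)) < length (x#y#zs) \<and> op ((x#y#zs)!Suc (Suc (Suc k))) = Rcv) \<and>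
     (op ((x#y#zs)!Suc (Suc k)) = Rcv \<longrightarrow> 0 < Suc (Suc k) \<and> op ((x#y#zs)!(Suc (Suc k)-1)) = Snd)"
      using "3.prems"[rule_format, of "Suc (Suc k)"] k by simp
    {
      assume "op (zs!k) = Snd"
      then show "Suc k < length zs" "op (zs!Suc k) = Rcv" using P by auto
    next
      assume r: "op (zs!k) = Rcv"
      show "0 < k"
      proof (rule ccontr)
        assume "\<not> 0 < k" then have "k = 0" by simp
        then show False using P r y by simp
      qed
      then show "op (zs!(k-1)) = Snd" using P r by (cases k) auto
    }
  qed
  then show ?case using x y by (simp add: alt.alt2)
qed

lemma G2:
  assumes d: "distinct \<sigma>"
    and a: "\<forall>(s,r)\<in>R. s \<in> set \<sigma> \<and> r \<in> set \<sigma> \<and> op s = Snd \<and> op r = Rcv \<and> ch s = ch r \<and> before \<sigma> s r \<and>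
              (\<forall>v. ch v = ch s \<longrightarrow> \<not> (before \<sigma> s v \<and> before \<sigma> v r))"
    and b: "\<forall>s\<in>set \<sigma>. op s = Snd \<longrightarrow> (\<exists>r. (s,r)\<in>R)"
    and c: "\<forall>r\<in>set \<sigma>. op r = Rcv \<longrightarrow> (\<exists>s. (s,r)\<in>R)"
  shows "well_formed (\<lambda>_. 1) thr op ch \<sigma> \<and> rf_of op ch \<sigma> = R"
proof -
  have adj: "\<exists>k. Suc k < length (filter (\<lambda>v. ch v = ch s) \<sigma>) \<and> filter (\<lambda>v. ch v = ch s) \<sigma> ! k = s
      \<and> filter (\<lambda>v. ch v = ch s) \<sigma> ! Suc k = r" if sr: "(s,r)\<in>R" for s r
  proof -
    have *: "ch s = ch r" "before \<sigma> s r" "\<forall>v. ch v = ch s \<longrightarrow> \<not> (before \<sigma> s v \<and> before \<sigma> v r)"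
      using a sr by auto
    show ?thesis by (rule adj_filter[OF d]) (use * in auto)
  qed
  have A: "alt op (filter (\<lambda>v. ch v = c) \<sigma>)" for c
  proof (rule P_alt, intro allI impI conjI)
    define L where "L = filter (\<lambda>v. ch v = c) \<sigma>"
    have dL: "distinct L" using d by (simp add: L_def)
    fix k assume k: "k < length (filter (\<lambda>v. ch v = c) \<sigma>)"
    then have kL: "k < length L" by (simp add: L_def)
    then have mem: "L!k \<in> set L" by simp
    then have sin: "L!k \<in> set \<sigma>" and chk: "ch (L!k) = c" by (simp_all add: L_def)
    {
      assume op: "op (filter (\<lambda>v. ch v = c) \<sigma> ! k) = Snd"
      then have "op (L!k) = Snd" by (simp add: L_def)
      then obtain r where r: "(L!k, r) \<in> R" using b sin by blast
      then obtain k0 where k0: "Suc k0 < length L" "L!k0 = L!k" "L!Suc k0 = r"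
        using adj[OF r] chk by (auto simp: L_def)
      have "k0 = k" using k0 kL dL nth_eq_iff_index_eq by (metis Suc_lessD)
      moreover have "op r = Rcv" using a r by auto
      ultimately show "Suc k < length (filter (\<lambda>v. ch v = c) \<sigma>)"
         "op (filter (\<lambda>v. ch v = c) \<sigma> ! Suc k) = Rcv" using k0 by (simp_all add: L_def)
    next
      assume op: "op (filter (\<lambda>v. ch v = c) \<sigma> ! k) = Rcv"
      then have "op (L!k) = Rcv" by (simp add: L_def)
      then obtain s where s: "(s, L!k) \<in> R" using c sin by blast
      then have chs: "ch s = c" using a chk by auto
      obtain k0 where k0: "Suc k0 < length L" "L!k0 = s" "L!Suc k0 = L!k"
        using adj[OF s] chs by (auto simp: L_def)
      have "Suc k0 = k" using k0 kL dL nth_eq_iff_index_eq by metis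
      moreover have "op s = Snd" using a s by auto
      ultimately show "0 < k" "op (filter (\<lambda>v. ch v = c) \<sigma> ! (k - 1)) = Snd" using k0 by (auto simp: L_def)
    }
  qed
  then have AA: "\<forall>c. alt op (filter (\<lambda>v. ch v = c) \<sigma>)" by blast
  have wf: "well_formed (\<lambda>_. 1) thr op ch \<sigma>" using WF_iff[THEN iffD2, OF AA] .
  have "(s, r) \<in> rf_of op ch \<sigma> \<longleftrightarrow> (s, r) \<in> R" for s r
  proof
    assume "(s, r) \<in> rf_of op ch \<sigma>"
    then have "\<exists>c k. even k \<and> Suc k < length (filter (\<lambda>v. ch v = c) \<sigma>) \<and>
     filter (\<lambda>v. ch v = c) \<sigma> ! k = s \<and> filter (\<lambda>v. ch v = c) \<sigma> ! Suc k = r"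
      using rf_of_alt[OF AA] by simp
    then obtain c k where k: "even k" "Suc k < length (filter (\<lambda>v. ch v = c) \<sigma>)"
     "filter (\<lambda>v. ch v = c) \<sigma> ! k = s" "filter (\<lambda>v. ch v = c) \<sigma> ! Suc k = r" by blast
    define L where "L = filter (\<lambda>v. ch v = c) \<sigma>"
    have dL: "distinct L" using d by (simp add: L_def)
    have k': "Suc k < length L" "L!k = s" "L!Suc k = r" using k by (simp_all add: L_def)
    have "s \<in> set L" using k' nth_mem[of k L] by simp
    then have sin: "s \<in> set \<sigma>" and chs: "ch s = c" by (simp_all add: L_def)
    have "op s = Snd" using alt_nth[OF A[of c], of k] k by simp
    then obtain r' where r': "(s, r') \<in> R" using b sin by blast
    then obtain k0 where k0: "Suc k0 < length L" "L!k0 = s" "L!Suc k0 = r'"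
      using adj[OF r'] chs by (auto simp: L_def)
    have "k0 = k" using k0 k' dL nth_eq_iff_index_eq by (metis Suc_lessD)
    then show "(s, r) \<in> R" using r' k0 k' by simp
  next
    assume sr: "(s, r) \<in> R"
    obtain k where k: "Suc k < length (filter (\<lambda>v. ch v = ch s) \<sigma>)" "filter (\<lambda>v. ch v = ch s) \<sigma> ! k = s"
      "filter (\<lambda>v. ch v = ch s) \<sigma> ! Suc k = r" using adj[OF sr] by blast
    have "op s = Snd" using a sr by auto
    then have "even k" using alt_nth[OF A[of "ch s"], of k] k by (auto split: if_splits)
    then show "(s, r) \<in> rf_of op ch \<sigma>" using rf_of_alt[OF AA] k by blast
  qed
  then show ?thesis using wf by auto
qed



locale setting =
  fixes S :: "'e set" and po :: "('e \<times> 'e) set" and thr :: "'e \<Rightarrow> 't"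
    and lab :: "'e \<Rightarrow> 'x acc" and rf :: "'e \<Rightarrow> 'e" and idx :: "'e \<Rightarrow> nat"
  assumes vsc: "vsc_instance S po thr lab rf"
    and ve: "valid_enum S lab rf idx"
begin

abbreviation "M \<equiv> Mseq S lab rf idx"
abbreviation "RD \<equiv> readers S lab rf"
abbreviation "mr \<equiv> mreg S lab rf"

lemma finS: "finite S" using vsc by (simp add: vsc_instance_def)

lemma read_ok: "r \<in> S \<Longrightarrow> \<not> is_wr (lab r) \<Longrightarrow> rf r \<in> S \<and> is_wr (lab (rf r)) \<and> regof (lab (rf r)) = regof (lab r)"
  using vsc by (simp add: vsc_instance_def)

lemma p_le_m: "w \<in> S \<Longrightarrow> lab w = Wr x \<Longrightarrow> card (RD w) \<le> mr x"
  unfolding mreg_def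
  by (rule Max_ge) (use finS in auto)

lemma idx_bij: "w \<in> S \<Longrightarrow> is_wr (lab w) \<Longrightarrow> bij_betw idx (RD w) {1..card (RD w)}"
  using ve by (simp add: valid_enum_def)

lemma idx_range: "w \<in> S \<Longrightarrow> is_wr (lab w) \<Longrightarrow> r \<in> RD w \<Longrightarrow> 1 \<le> idx r \<and> idx r \<le> card (RD w)"
  using idx_bij[of w] by (auto simp: bij_betw_def)

lemma idx_inj: "w \<in> S \<Longrightarrow> is_wr (lab w) \<Longrightarrow> r1 \<in> RD w \<Longrightarrow> r2 \<in> RD w \<Longrightarrow> idx r1 = idx r2 \<Longrightarrow> r1 = r2"
  using idx_bij[of w] by (auto simp: bij_betw_def inj_on_def)

lemma idx_surj: "w \<in> S \<Longrightarrow> is_wr (lab w) \<Longrightarrow> 1 \<le> j \<Longrightarrow> j \<le> card (RD w) \<Longrightarrow> \<exists>r\<in>RD w. idx r = j"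
  using idx_bij[of w] unfolding bij_betw_def by (metis atLeastAtMost_iff imageE)

lemma RD_iff: "r \<in> RD w \<longleftrightarrow> r \<in> S \<and> \<not> is_wr (lab r) \<and> rf r = w"
  by (simp add: readers_def)

lemma M_wr_len: "w \<in> S \<Longrightarrow> lab w = Wr x \<Longrightarrow> length (M w) = mr x + (mr x - card (RD w)) + 2"
  using p_le_m[of w x] by (simp add: Mseq_def del: upt_Suc)

lemma M_wr_nth: "w \<in> S \<Longrightarrow> lab w = Wr x \<Longrightarrow> k < length (M w) \<Longrightarrow>
  M w ! k = (if k = 0 then (Snd, Lch) else if k \<le> mr x then (Snd, Cch x k)
             else if k \<le> mr x + (mr x - card (RD w)) then (Rcv, Cch x (k - mr x + card (RD w)))
             else (Rcv, Lch))"
  using p_le_m[of w x] by (auto simp: Mseq_def nth_append simp del: upt_Suc)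

lemma M_rd: "lab r = Rd x \<Longrightarrow> M r = [(Snd, Lch), (Rcv, Cch x (idx r)), (Rcv, Lch)]"
  by (simp add: Mseq_def)

lemma len_ge2: "e \<in> S \<Longrightarrow> 2 \<le> length (M e)"
proof (cases "lab e")
  case (Wr x)
  assume "e \<in> S" then show ?thesis using M_wr_len[of e x] Wr by simp
next
  case (Rd x) then show ?thesis using M_rd[of e x] by simp
qed

lemma M_ne: "e \<in> S \<Longrightarrow> M e \<noteq> []"
  using len_ge2[of e] by auto

lemma M_first: "M e ! 0 = (Snd, Lch)"
  by (cases "lab e") (simp_all add: Mseq_def)

lemma M_last: "e \<in> S \<Longrightarrow> M e ! (length (M e) - 1) = (Rcv, Lch)"
proof (cases "lab e")
  case (Wr x)
  assume e: "e \<in> S"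
  have "length (M e) - 1 < length (M e)" using len_ge2[OF e] by simp
  then show ?thesis using M_wr_nth[OF e Wr] M_wr_len[OF e Wr] by simp
next
  case (Rd x) then show ?thesis using M_rd[of e x] by simp
qed

lemma M_mid_notL: "e \<in> S \<Longrightarrow> 0 < k \<Longrightarrow> k < length (M e) - 1 \<Longrightarrow> snd (M e ! k) \<noteq> Lch"
proof (cases "lab e")
  case (Wr x)
  assume e: "e \<in> S" and k: "0 < k" "k < length (M e) - 1"
  then show ?thesis using M_wr_nth[OF e Wr, of k] M_wr_len[OF e Wr] by auto
next
  case (Rd x)
  assume "0 < k" "k < length (M e) - 1"
  then show ?thesis using M_rd[OF Rd] by (cases k) auto
qed

definition blk :: "'e \<Rightarrow> ('e \<times> nat) list" where
  "blk e = map (Pair e) [0..<length (M e)]"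

definition flat :: "'e list \<Rightarrow> ('e \<times> nat) list" where
  "flat \<sigma> = concat (map blk \<sigma>)"

lemma set_blk: "set (blk e) = {(e, k) | k. k < length (M e)}"
  by (auto simp: blk_def)

lemma set_flat: "set (flat \<sigma>) = {(e, k). e \<in> set \<sigma> \<and> k < length (M e)}"
  by (auto simp: flat_def blk_def)

lemma distinct_flat: "distinct \<sigma> \<Longrightarrow> distinct (flat \<sigma>)"
proof (induction \<sigma>)
  case Nil then show ?case by (simp add: flat_def)
next
  case (Cons e \<sigma>)
  have "flat (e # \<sigma>) = blk e @ flat \<sigma>" by (simp add: flat_def)
  moreover have "distinct (blk e)" by (simp add: blk_def distinct_map inj_on_def)
  moreover have "set (blk e) \<inter> set (flat \<sigma>) = {}" using Cons.prems by (auto simp: set_blk set_flat)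
  ultimately show ?case using Cons by simp
qed

lemma before_upt: "before [0..<n] i j \<longleftrightarrow> i < j \<and> j < n"
proof (cases "i < n \<and> j < n")
  case True
  then show ?thesis using before_nth[of "[0..<n]" i j] by simp
next
  case False
  then have "\<not> before [0..<n] i j" using before_set[of "[0..<n]" i j] by auto
  then show ?thesis using False by auto
qed

lemma before_blk: "before (blk e) u v \<longleftrightarrow> (\<exists>k1 k2. u = (e, k1) \<and> v = (e, k2) \<and> k1 < k2 \<and> k2 < length (M e))"
proof
  assume b: "before (blk e) u v"
  then have "u \<in> set (blk e)" "v \<in> set (blk e)" using before_set[OF b] by auto
  then obtain k1 k2 where u: "u = (e, k1)" and v: "v = (e, k2)" by (auto simp: set_blk)
  have "inj (Pair e)" by (simp add: inj_def)
  then have "before [0..<length (M e)] k1 k2" using b before_map_inj[of "Pair e" "[0..<length (M e)]" k1 k2]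
    by (simp add: blk_def u v)
  then show "\<exists>k1 k2. u = (e, k1) \<and> v = (e, k2) \<and> k1 < k2 \<and> k2 < length (M e)"
    using u v by (simp add: before_upt)
next
  assume "\<exists>k1 k2. u = (e, k1) \<and> v = (e, k2) \<and> k1 < k2 \<and> k2 < length (M e)"
  then obtain k1 k2 where u: "u = (e, k1)" and v: "v = (e, k2)" and k: "k1 < k2" "k2 < length (M e)" by blast
  have "inj (Pair e)" by (simp add: inj_def)
  then show "before (blk e) u v" using before_map_inj[of "Pair e" "[0..<length (M e)]" k1 k2] k
    by (simp add: blk_def u v before_upt)
qed

lemma before_flat: "distinct \<sigma> \<Longrightarrow> before (flat \<sigma>) (e1, k1) (e2, k2) \<longleftrightarrow>
   e1 \<in> set \<sigma> \<and> e2 \<in> set \<sigma> \<and> k1 < length (M e1) \<and> k2 < length (M e2) \<and>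
   ((e1 = e2 \<and> k1 < k2) \<or> (e1 \<noteq> e2 \<and> before \<sigma> e1 e2))"
proof (induction \<sigma>)
  case Nil then show ?case by (simp add: flat_def)
next
  case (Cons e \<sigma>)
  have f: "flat (e # \<sigma>) = blk e @ flat \<sigma>" by (simp add: flat_def)
  show ?case using Cons
    by (auto simp: f before_append before_blk set_blk set_flat before_Cons dest: before_set)
qed

abbreviation "SS \<equiv> S' S lab rf idx"
abbreviation "OP \<equiv> op' S lab rf idx"
abbreviation "CH \<equiv> ch' S lab rf idx"
abbreviation "PO \<equiv> po' S po lab rf idx"
abbreviation "RF \<equiv> rf' S lab rf idx"
abbreviation "TH \<equiv> thr' thr"

lemma OP_eq: "OP (e, k) = fst (M e ! k)" by (simp add: op'_def)
lemma CH_eq: "CH (e, k) = snd (M e ! k)" by (simp add: ch'_def)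
lemma SS_iff: "(e, k) \<in> SS \<longleftrightarrow> e \<in> S \<and> k < length (M e)" by (simp add: S'_def)

lemma po_sub: "(a, b) \<in> po \<Longrightarrow> a \<in> S \<and> b \<in> S" using vsc by (auto simp: vsc_instance_def)
lemma po_irr: "(a, a) \<notin> po" using vsc by (auto simp: vsc_instance_def irrefl_def)
lemma po_tot: "a \<in> S \<Longrightarrow> b \<in> S \<Longrightarrow> a \<noteq> b \<Longrightarrow> thr a = thr b \<Longrightarrow> (a, b) \<in> po \<or> (b, a) \<in> po"
  using vsc by (auto simp: vsc_instance_def)
lemma po_thr: "(a, b) \<in> po \<Longrightarrow> thr a = thr b" using vsc by (auto simp: vsc_instance_def)

lemma wr_ch: "w \<in> S \<Longrightarrow> lab w = Wr x \<Longrightarrow> k < length (M w) \<Longrightarrow> snd (M w ! k) = Cch y i \<Longrightarrow>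
   y = x \<and> ((1 \<le> k \<and> k \<le> mr x \<and> i = k) \<or>
     (mr x < k \<and> k \<le> mr x + (mr x - card (RD w)) \<and> i = k - mr x + card (RD w)))"
  using M_wr_nth[of w x k] by (auto split: if_splits)

lemma wr_op: "w \<in> S \<Longrightarrow> lab w = Wr x \<Longrightarrow> k < length (M w) \<Longrightarrow>
   (fst (M w ! k) = Snd \<longleftrightarrow> k \<le> mr x) \<and>
   (k \<le> mr x + (mr x - card (RD w)) \<longrightarrow> k \<noteq> 0 \<longrightarrow> snd (M w ! k) \<noteq> Lch)"
  using M_wr_nth[of w x k] by (auto split: if_splits)

definition sc_ord :: "'e list \<Rightarrow> bool" where
  "sc_ord \<sigma> \<longleftrightarrow> distinct \<sigma> \<and> set \<sigma> = S \<and> (\<forall>(a, b)\<in>po. before \<sigma> a b) \<and>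
        (\<forall>r\<in>S. \<not> is_wr (lab r) \<longrightarrow>
           before \<sigma> (rf r) r \<and>
           (\<forall>w\<in>S. is_wr (lab w) \<and> regof (lab w) = regof (lab r) \<and> w \<noteq> rf r \<longrightarrow>
              \<not> (before \<sigma> (rf r) w \<and> before \<sigma> w r)))"

lemma sc_iff: "seq_consistent S po lab rf \<longleftrightarrow> (\<exists>\<sigma>. sc_ord \<sigma>)"
  unfolding seq_consistent_def sc_ord_def ..

definition cond_a :: "('e \<times> nat) list \<Rightarrow> 'e \<times> nat \<Rightarrow> 'e \<times> nat \<Rightarrow> bool" where
  "cond_a \<tau> s r \<longleftrightarrow> s \<in> set \<tau> \<and> r \<in> set \<tau> \<and> OP s = Snd \<and> OP r = Rcv \<and> CH s = CH r \<and> before \<tau> s r \<and>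
              (\<forall>v. CH v = CH s \<longrightarrow> \<not> (before \<tau> s v \<and> before \<tau> v r))"

lemma bF: "sc_ord \<sigma> \<Longrightarrow> before (flat \<sigma>) (e1, k1) (e2, k2) \<longleftrightarrow>
   e1 \<in> S \<and> e2 \<in> S \<and> k1 < length (M e1) \<and> k2 < length (M e2) \<and>
   ((e1 = e2 \<and> k1 < k2) \<or> (e1 \<noteq> e2 \<and> before \<sigma> e1 e2))"
  using before_flat[of \<sigma> e1 k1 e2 k2] by (simp add: sc_ord_def)

lemma sF: "sc_ord \<sigma> \<Longrightarrow> (e, k) \<in> set (flat \<sigma>) \<longleftrightarrow> e \<in> S \<and> k < length (M e)"
  by (simp add: set_flat sc_ord_def)

lemma A_pair:
  assumes sc: "sc_ord \<sigma>" and e: "e \<in> S"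
  shows "cond_a (flat \<sigma>) (e, 0) (e, length (M e) - 1)"
proof -
  have d: "distinct \<sigma>" using sc by (simp add: sc_ord_def)
  have l: "2 \<le> length (M e)" using len_ge2[OF e] .
  have nb: "\<not> (before (flat \<sigma>) (e, 0) v \<and> before (flat \<sigma>) v (e, length (M e) - 1))"
    if "CH v = CH (e, 0)" for v
  proof
    obtain e2 k2 where v: "v = (e2, k2)" by fastforce
    assume "before (flat \<sigma>) (e, 0) v \<and> before (flat \<sigma>) v (e, length (M e) - 1)"
    then have b1: "before (flat \<sigma>) (e, 0) (e2, k2)" and b2: "before (flat \<sigma>) (e2, k2) (e, length (M e) - 1)"
      by (simp_all add: v)
    show False
    proof (cases "e2 = e")
      case True
      then have "0 < k2" "k2 < length (M e) - 1" using b1 b2 bF[OF sc] by auto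
      then show False using M_mid_notL[OF e] that M_first True by (simp add: v CH_eq)
    next
      case False
      then have "before \<sigma> e e2" "before \<sigma> e2 e" using b1 b2 bF[OF sc] by auto
      then show False using before_asym[OF d] by blast
    qed
  qed
  show ?thesis unfolding cond_a_def
    using nb l e M_first M_last[OF e] by (auto simp: sF[OF sc] bF[OF sc] OP_eq CH_eq)
qed

lemma C_pair:
  assumes sc: "sc_ord \<sigma>" and w: "w \<in> S" and x: "lab w = Wr x"
    and j: "card (RD w) < j" "j \<le> mr x"
  shows "cond_a (flat \<sigma>) (w, j) (w, mr x + j - card (RD w))"
proof -
  have d: "distinct \<sigma>" using sc by (simp add: sc_ord_def)
  define m where "m = mr x"
  define p where "p = card (RD w)"
  have len: "length (M w) = m + (m - p) + 2" using M_wr_len[OF w x] by (simp add: m_def p_def)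
  have j': "p < j" "j \<le> m" using j by (simp_all add: m_def p_def)
  have Mj: "M w ! j = (Snd, Cch x j)" using M_wr_nth[OF w x, of j, folded m_def p_def] j' len by simp
  have kk: "m + j - p < length (M w)" "\<not> m + j - p \<le> m" "m + j - p \<le> m + (m - p)" "m + j - p - m + p = j"
    using j' len by auto
  have Mk: "M w ! (m + j - p) = (Rcv, Cch x j)" using M_wr_nth[OF w x, of "m + j - p", folded m_def p_def] kk j' by (auto split: if_splits)
  have nb: "\<not> (before (flat \<sigma>) (w, j) v \<and> before (flat \<sigma>) v (w, m + j - p))"
    if "CH v = CH (w, j)" for v
  proof
    obtain e2 k2 where v: "v = (e2, k2)" by fastforce
    assume "before (flat \<sigma>) (w, j) v \<and> before (flat \<sigma>) v (w, m + j - p)"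
    then have b1: "before (flat \<sigma>) (w, j) (e2, k2)" and b2: "before (flat \<sigma>) (e2, k2) (w, m + j - p)"
      by (simp_all add: v)
    show False
    proof (cases "e2 = w")
      case True
      then have k2: "j < k2" "k2 < m + j - p" using b1 b2 bF[OF sc] by auto
      have "snd (M w ! k2) = Cch x j" using that Mj True by (simp add: v CH_eq)
      then have "x = x \<and> ((1 \<le> k2 \<and> k2 \<le> m \<and> j = k2) \<or> (m < k2 \<and> k2 \<le> m + (m - p) \<and> j = k2 - m + p))"
        using wr_ch[OF w x, of k2 x j, folded m_def p_def] k2 len j' by simp
      then show False using k2 j' by auto
    next
      case False
      then have "before \<sigma> w e2" "before \<sigma> e2 w" using b1 b2 bF[OF sc] by auto
      then show False using before_asym[OF d] by blast
    qed
  qed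
  show ?thesis unfolding cond_a_def m_def[symmetric] p_def[symmetric]
    using nb w Mj Mk len j' by (auto simp: sF[OF sc] bF[OF sc] OP_eq CH_eq)
qed

lemma rd_lab: "r \<in> S \<Longrightarrow> \<not> is_wr (lab r) \<Longrightarrow> lab r = Rd (regof (lab r))"
  by (cases "lab r") auto

lemma wr_lab: "is_wr (lab w) \<Longrightarrow> lab w = Wr (regof (lab w))"
  by (cases "lab w") auto

lemma B_pair:
  assumes sc: "sc_ord \<sigma>" and w: "w \<in> S" and ww: "is_wr (lab w)" and r: "r \<in> RD w"
  shows "cond_a (flat \<sigma>) (w, idx r) (r, 1)"
proof -
  have d: "distinct \<sigma>" using sc by (simp add: sc_ord_def)
  have SC: "\<And>r w2. r \<in> S \<Longrightarrow> \<not> is_wr (lab r) \<Longrightarrow> w2 \<in> S \<Longrightarrow> is_wr (lab w2) \<Longrightarrow>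
      regof (lab w2) = regof (lab r) \<Longrightarrow> w2 \<noteq> rf r \<Longrightarrow> \<not> (before \<sigma> (rf r) w2 \<and> before \<sigma> w2 r)"
    and SC1: "\<And>r. r \<in> S \<Longrightarrow> \<not> is_wr (lab r) \<Longrightarrow> before \<sigma> (rf r) r"
    using sc unfolding sc_ord_def by blast+
  define x where "x = regof (lab w)"
  have x: "lab w = Wr x" using wr_lab[OF ww] by (simp add: x_def)
  have rS: "r \<in> S" and rn: "\<not> is_wr (lab r)" and rw: "rf r = w" using r by (simp_all add: RD_iff)
  have rx: "regof (lab r) = x" using read_ok[OF rS rn] rw by (simp add: x_def)
  have rl: "lab r = Rd x" using rd_lab[OF rS rn] rx by simp
  define j where "j = idx r"
  have jr: "1 \<le> j" "j \<le> card (RD w)" using idx_range[OF w ww r] by (simp_all add: j_def)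
  have pm: "card (RD w) \<le> mr x" using p_le_m[OF w x] .
  have len: "length (M w) = mr x + (mr x - card (RD w)) + 2" using M_wr_len[OF w x] .
  have Mj: "M w ! j = (Snd, Cch x j)" using M_wr_nth[OF w x, of j] jr pm len by auto
  have Mr: "M r = [(Snd, Lch), (Rcv, Cch x j), (Rcv, Lch)]" using M_rd[OF rl] by (simp add: j_def)
  have wr: "w \<noteq> r" using ww rn by auto
  have bwr: "before \<sigma> w r" using SC1[OF rS rn] rw by simp
  have nb: "\<not> (before (flat \<sigma>) (w, j) v \<and> before (flat \<sigma>) v (r, 1))"
    if "CH v = CH (w, j)" for v
  proof
    obtain e k where v: "v = (e, k)" by fastforce
    assume "before (flat \<sigma>) (w, j) v \<and> before (flat \<sigma>) v (r, 1)"
    then have b1: "before (flat \<sigma>) (w, j) (e, k)" and b2: "before (flat \<sigma>) (e, k) (r, 1)"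
      by (simp_all add: v)
    have chv: "snd (M e ! k) = Cch x j" using that Mj by (simp add: v CH_eq)
    have eS: "e \<in> S" and kl: "k < length (M e)" using b1 bF[OF sc] by auto
    show False
    proof (cases "e = w")
      case True
      then have "j < k" using b1 bF[OF sc] by auto
      moreover have "x = x \<and> ((1 \<le> k \<and> k \<le> mr x \<and> j = k) \<or>
         (mr x < k \<and> k \<le> mr x + (mr x - card (RD w)) \<and> j = k - mr x + card (RD w)))"
        using wr_ch[OF w x, of k x j] True kl chv by simp
      ultimately show False using jr by auto
    next
      case ew: False
      show False
      proof (cases "e = r")
        case True
        then have "k < 1" using b2 bF[OF sc] wr by auto
        then show False using chv True Mr by simp
      next
        case er: False
        have be1: "before \<sigma> w e" using b1 bF[OF sc] ew by auto
        have be2: "before \<sigma> e r" using b2 bF[OF sc] er by auto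
        show False
        proof (cases "is_wr (lab e)")
          case True
          define y where "y = regof (lab e)"
          have y: "lab e = Wr y" using wr_lab[OF True] by (simp add: y_def)
          have "y = x" using wr_ch[OF eS y kl chv] by simp
          then have "regof (lab e) = regof (lab r)" using rx by (simp add: y_def)
          then show False using SC[OF rS rn eS True] rw ew be1 be2 by simp
        next
          case en: False
          define y where "y = regof (lab e)"
          have y: "lab e = Rd y" using rd_lab[OF eS en] by (simp add: y_def)
          have Me: "M e = [(Snd, Lch), (Rcv, Cch y (idx e)), (Rcv, Lch)]" using M_rd[OF y] .
          have "k < 3" using kl Me by simp
          then have "k = 0 \<or> k = 1 \<or> k = 2" by auto
          then have k1: "k = 1" and yx: "y = x" and ie: "idx e = j" using chv Me by auto
          define w' where "w' = rf e"
          have w'S: "w' \<in> S" and w'w: "is_wr (lab w')" and w'x: "regof (lab w') = x"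
            using read_ok[OF eS en] yx by (simp_all add: w'_def y_def)
          have bw'e: "before \<sigma> w' e" using SC1[OF eS en] by (simp add: w'_def)
          show False
          proof (cases "w' = w")
            case True
            then have "e \<in> RD w" using eS en by (simp add: RD_iff w'_def)
            then have "e = r" using idx_inj[OF w ww _ r] ie by (simp add: j_def)
            then show False using er by simp
          next
            case False
            have wS: "w \<in> S" using w .
            have "before \<sigma> w' w \<or> before \<sigma> w w'"
              using before_total[of w' \<sigma> w] w'S w sc False by (auto simp: sc_ord_def)
            then show False
            proof
              assume "before \<sigma> w' w"
              moreover have "regof (lab w) = regof (lab e)" using x yx by (simp add: y_def)
              ultimately show False using SC[OF eS en w ww] be1 False by (simp add: w'_def)
            next
              assume a: "before \<sigma> w w'"
              have "before \<sigma> w' r" using before_trans[OF d bw'e be2] .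
              then show False using SC[OF rS rn w'S w'w] a False rw w'x rx by simp
            qed
          qed
        qed
      qed
    qed
  qed
  show ?thesis unfolding cond_a_def j_def[symmetric]
    using nb w rS wr bwr Mj Mr len jr pm by (auto simp: sF[OF sc] bF[OF sc] OP_eq CH_eq)
qed

lemma RF_iff: "(u, v) \<in> RF \<longleftrightarrow> (\<exists>e. e \<in> S \<and> u = (e, 0) \<and> v = (e, length (M e) - 1)) \<or>
   (\<exists>w r. w \<in> S \<and> is_wr (lab w) \<and> r \<in> RD w \<and> u = (w, idx r) \<and> v = (r, 1)) \<or>
   (\<exists>w x j. w \<in> S \<and> lab w = Wr x \<and> card (RD w) < j \<and> j \<le> mr x \<and> u = (w, j) \<and> v = (w, mr x + j - card (RD w)))"
  unfolding rf'_def by blast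

lemma dir1:
  assumes sc: "sc_ord \<sigma>"
  shows "vch_consistent SS PO (\<lambda>_. 1) TH OP CH RF"
proof -
  define \<tau> where "\<tau> = flat \<sigma>"
  have d: "distinct \<sigma>" and sS: "set \<sigma> = S" and poS: "\<forall>(a, b)\<in>po. before \<sigma> a b"
    using sc by (simp_all add: sc_ord_def)
  have dt: "distinct \<tau>" using distinct_flat[OF d] by (simp add: \<tau>_def)
  have st: "set \<tau> = SS" using sS by (auto simp: \<tau>_def set_flat S'_def)
  have key: "(before \<tau> (e1, k1) (e2, k2) \<and> thr e1 = thr e2) \<longleftrightarrow> ((e1, k1), (e2, k2)) \<in> PO" for e1 k1 e2 k2
  proof
    assume a: "before \<tau> (e1, k1) (e2, k2) \<and> thr e1 = thr e2"
    then have e: "e1 \<in> S" "e2 \<in> S" "k1 < length (M e1)" "k2 < length (M e2)"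
      and c: "(e1 = e2 \<and> k1 < k2) \<or> (e1 \<noteq> e2 \<and> before \<sigma> e1 e2)"
      using bF[OF sc] by (auto simp: \<tau>_def)
    have "(e1 = e2 \<and> k1 < k2) \<or> (e1, e2) \<in> po"
    proof (cases "e1 = e2")
      case True then show ?thesis using c by simp
    next
      case False
      then have b: "before \<sigma> e1 e2" using c by simp
      have "(e1, e2) \<in> po \<or> (e2, e1) \<in> po" using po_tot[OF e(1,2) False] a by simp
      moreover have "(e2, e1) \<notin> po" using poS b before_asym[OF d] by blast
      ultimately show ?thesis by simp
    qed
    then show "((e1, k1), (e2, k2)) \<in> PO" using e by (simp add: po'_def S'_def)
  next
    assume "((e1, k1), (e2, k2)) \<in> PO"
    then have e: "e1 \<in> S" "e2 \<in> S" "k1 < length (M e1)" "k2 < length (M e2)"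
      and c: "(e1 = e2 \<and> k1 < k2) \<or> (e1, e2) \<in> po" by (simp_all add: po'_def S'_def)
    from c show "before \<tau> (e1, k1) (e2, k2) \<and> thr e1 = thr e2"
    proof
      assume "e1 = e2 \<and> k1 < k2" then show ?thesis using e bF[OF sc] by (simp add: \<tau>_def)
    next
      assume p: "(e1, e2) \<in> po"
      then have "e1 \<noteq> e2" using po_irr by blast
      moreover have "before \<sigma> e1 e2" using poS p by blast
      ultimately show ?thesis using e bF[OF sc] po_thr[OF p] by (simp add: \<tau>_def)
    qed
  qed
  have pot: "po_of TH \<tau> = PO"
  proof (rule set_eqI)
    fix q :: "('e \<times> nat) \<times> ('e \<times> nat)"
    obtain e1 k1 e2 k2 where q: "q = ((e1, k1), (e2, k2))" by (metis prod.collapse)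
    show "q \<in> po_of TH \<tau> \<longleftrightarrow> q \<in> PO" using key[of e1 k1 e2 k2] by (simp add: q po_of_before thr'_def)
  qed
  have ca: "\<forall>(s, r)\<in>RF. cond_a \<tau> s r"
  proof (intro ballI, clarify)
    fix s r assume "(s, r) \<in> RF"
    then show "cond_a \<tau> s r" unfolding RF_iff \<tau>_def using A_pair[OF sc] B_pair[OF sc] C_pair[OF sc] by blast
  qed
  have cb: "\<forall>s\<in>set \<tau>. OP s = Snd \<longrightarrow> (\<exists>r. (s, r) \<in> RF)"
  proof (intro ballI impI)
    fix s assume sin: "s \<in> set \<tau>" and op: "OP s = Snd"
    obtain e k where s: "s = (e, k)" by fastforce
    have eS: "e \<in> S" and kl: "k < length (M e)" using sin st by (simp_all add: s SS_iff)
    have opk: "fst (M e ! k) = Snd" using op by (simp add: s OP_eq)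
    show "\<exists>r. (s, r) \<in> RF"
    proof (cases "k = 0")
      case True then show ?thesis using eS unfolding RF_iff s by blast
    next
      case k0: False
      show ?thesis
      proof (cases "is_wr (lab e)")
        case False
        have "lab e = Rd (regof (lab e))" using rd_lab[OF eS False] .
        from M_rd[OF this] kl opk k0 have False by (cases k; cases "k - 1") auto
        then show ?thesis ..
      next
        case True
        define x where "x = regof (lab e)"
        have x: "lab e = Wr x" using wr_lab[OF True] by (simp add: x_def)
        have km: "k \<le> mr x" using wr_op[OF eS x kl] opk by simp
        show ?thesis
        proof (cases "k \<le> card (RD e)")
          case True
          then obtain r where r: "r \<in> RD e" "idx r = k" using idx_surj[OF eS \<open>is_wr (lab e)\<close>, of k] k0 by auto
          then show ?thesis unfolding RF_iff s using eS \<open>is_wr (lab e)\<close> by metis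
        next
          case False
          then show ?thesis unfolding RF_iff s using eS x km by force
        qed
      qed
    qed
  qed
  have cc: "\<forall>r\<in>set \<tau>. OP r = Rcv \<longrightarrow> (\<exists>s. (s, r) \<in> RF)"
  proof (intro ballI impI)
    fix s assume sin: "s \<in> set \<tau>" and op: "OP s = Rcv"
    obtain e k where s: "s = (e, k)" by fastforce
    have eS: "e \<in> S" and kl: "k < length (M e)" using sin st by (simp_all add: s SS_iff)
    have opk: "fst (M e ! k) = Rcv" using op by (simp add: s OP_eq)
    show "\<exists>r. (r, s) \<in> RF"
    proof (cases "k = length (M e) - 1")
      case True then show ?thesis using eS unfolding RF_iff s by blast
    next
      case kL: False
      show ?thesis
      proof (cases "is_wr (lab e)")
        case False
        have "lab e = Rd (regof (lab e))" using rd_lab[OF eS False] .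
        from M_rd[OF this] kl opk kL have k1: "k = 1" by (cases k; cases "k - 1") auto
        have "e \<in> RD (rf e)" using eS False by (simp add: RD_iff)
        moreover have "rf e \<in> S" "is_wr (lab (rf e))" using read_ok[OF eS False] by simp_all
        ultimately show ?thesis unfolding RF_iff s k1 by blast
      next
        case True
        define x where "x = regof (lab e)"
        have x: "lab e = Wr x" using wr_lab[OF True] by (simp add: x_def)
        have len: "length (M e) = mr x + (mr x - card (RD e)) + 2" using M_wr_len[OF eS x] .
        have pm: "card (RD e) \<le> mr x" using p_le_m[OF eS x] .
        have km: "\<not> k \<le> mr x" using wr_op[OF eS x kl] opk by auto
        have k2: "k \<le> mr x + (mr x - card (RD e))" using kl kL len by simp
        define j where "j = k - mr x + card (RD e)"
        have j: "card (RD e) < j" "j \<le> mr x" "mr x + j - card (RD e) = k" using km k2 pm by (auto simp: j_def)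
        show ?thesis unfolding RF_iff s using eS x j by metis
      qed
    qed
  qed
  have ca': "\<forall>(s, r)\<in>RF. s \<in> set \<tau> \<and> r \<in> set \<tau> \<and> OP s = Snd \<and> OP r = Rcv \<and> CH s = CH r \<and> before \<tau> s r \<and>
              (\<forall>v. CH v = CH s \<longrightarrow> \<not> (before \<tau> s v \<and> before \<tau> v r))"
    using ca unfolding cond_a_def by blast
  have "well_formed (\<lambda>_. 1) TH OP CH \<tau> \<and> rf_of OP CH \<tau> = RF" by (rule G2[OF dt ca' cb cc])
  then show ?thesis unfolding vch_consistent_def using dt st pot by blast
qed

lemma dir2:
  assumes vc: "vch_consistent SS PO (\<lambda>_. 1) TH OP CH RF"
  shows "\<exists>\<sigma>. sc_ord \<sigma>"
proof -
  obtain \<tau> where dt: "distinct \<tau>" and st: "set \<tau> = SS" and pot: "po_of TH \<tau> = PO"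
    and wf: "well_formed (\<lambda>_. 1) TH OP CH \<tau>" and rft: "rf_of OP CH \<tau> = RF"
    using vc unfolding vch_consistent_def by blast
  have inS: "(e, k) \<in> set \<tau> \<longleftrightarrow> e \<in> S \<and> k < length (M e)" for e k using st by (simp add: SS_iff)
  have inblk: "before \<tau> (e, k1) (e, k2)" if "e \<in> S" "k1 < k2" "k2 < length (M e)" for e k1 k2
  proof -
    have "((e, k1), (e, k2)) \<in> PO" using that by (simp add: po'_def S'_def)
    then have "((e, k1), (e, k2)) \<in> po_of TH \<tau>" using pot by simp
    then show ?thesis by (simp add: po_of_before)
  qed
  have leblk: "k1 = k2 \<or> before \<tau> (e, k1) (e, k2)" if "e \<in> S" "k1 \<le> k2" "k2 < length (M e)" for e k1 k2
    using inblk[of e k1 k2] that by (cases "k1 = k2") auto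
  have lch: "\<not> (before \<tau> (e, 0) v \<and> before \<tau> v (e, length (M e) - 1))" if "e \<in> S" "CH v = Lch" for e v
  proof -
    have "((e, 0), (e, length (M e) - 1)) \<in> RF" using that(1) unfolding RF_iff by blast
    then have "((e, 0), (e, length (M e) - 1)) \<in> rf_of OP CH \<tau>" using rft by simp
    from G1[OF dt wf this] have "\<forall>u. CH u = CH (e, 0) \<longrightarrow> \<not> (before \<tau> (e, 0) u \<and> before \<tau> u (e, length (M e) - 1))"
      by blast
    moreover have "CH (e, 0) = Lch" by (simp add: CH_eq M_first)
    ultimately show ?thesis using that(2) by metis
  qed
  have interval: "before \<tau> (e1, k1) (e2, k2)" if e: "e1 \<in> S" "e2 \<in> S" "e1 \<noteq> e2"
    and b: "before \<tau> (e1, 0) (e2, 0)" and k: "k1 < length (M e1)" "k2 < length (M e2)" for e1 e2 k1 k2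
  proof -
    define l1 where "l1 = length (M e1) - 1"
    have l1: "l1 < length (M e1)" using len_ge2[OF e(1)] by (simp add: l1_def)
    have "before \<tau> (e1, l1) (e2, 0) \<or> before \<tau> (e2, 0) (e1, l1)"
      using before_total[of "(e1, l1)" \<tau> "(e2, 0)"] inS[of e1 l1] inS[of e2 0] e l1 M_ne[OF e(2)] by simp
    moreover have "\<not> before \<tau> (e2, 0) (e1, l1)"
      using lch[OF e(1), of "(e2, 0)"] b M_first by (simp add: CH_eq l1_def)
    ultimately have m: "before \<tau> (e1, l1) (e2, 0)" by simp
    have a1: "k1 = l1 \<or> before \<tau> (e1, k1) (e1, l1)" using leblk[OF e(1), of k1 l1] k l1 by (simp add: l1_def)
    have a2: "0 = k2 \<or> before \<tau> (e2, 0) (e2, k2)" using leblk[OF e(2), of 0 k2] k by simp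
    from a1 show ?thesis
    proof
      assume "k1 = l1"
      with a2 m show ?thesis using before_trans[OF dt] by auto
    next
      assume a1': "before \<tau> (e1, k1) (e1, l1)"
      then have "before \<tau> (e1, k1) (e2, 0)" using m before_trans[OF dt] by blast
      with a2 show ?thesis using before_trans[OF dt] by auto
    qed
  qed
  define F where "F = filter (\<lambda>v. snd v = 0) \<tau>"
  define \<sigma> where "\<sigma> = map fst F"
  have Feq: "F = map (\<lambda>e. (e, 0)) \<sigma>"
  proof -
    have "map (\<lambda>e. (e, 0::nat)) \<sigma> = map (\<lambda>v. (fst v, 0)) F" by (simp add: \<sigma>_def)
    also have "\<dots> = F" by (rule map_idI) (auto simp: F_def)
    finally show ?thesis by simp
  qed
  have injf: "inj (\<lambda>e. (e, 0::nat))" by (simp add: inj_def)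
  have b\<sigma>: "before \<sigma> a b \<longleftrightarrow> before \<tau> (a, 0) (b, 0)" for a b
  proof -
    have "before \<sigma> a b \<longleftrightarrow> before (map (\<lambda>e. (e, 0::nat)) \<sigma>) (a, 0) (b, 0)"
      using before_map_inj[OF injf, of \<sigma> a b] by simp
    also have "\<dots> \<longleftrightarrow> before F (a, 0) (b, 0)" by (simp add: Feq)
    also have "\<dots> \<longleftrightarrow> before \<tau> (a, 0) (b, 0)" by (simp add: F_def before_filter)
    finally show ?thesis .
  qed
  have d\<sigma>: "distinct \<sigma>"
  proof -
    have "distinct F" using dt by (simp add: F_def)
    then show ?thesis by (simp add: Feq distinct_map)
  qed
  have s\<sigma>: "set \<sigma> = S"
  proof (rule set_eqI)
    fix e
    have "e \<in> set \<sigma> \<longleftrightarrow> (e, 0) \<in> set F" by (auto simp: Feq)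
    also have "\<dots> \<longleftrightarrow> e \<in> S" using inS[of e 0] len_ge2[of e] by (auto simp: F_def)
    finally show "e \<in> set \<sigma> \<longleftrightarrow> e \<in> S" .
  qed
  have b2: "before \<tau> (e1, k1) (e2, k2)" if "e1 \<in> S" "e2 \<in> S" "e1 \<noteq> e2" "before \<sigma> e1 e2"
     "k1 < length (M e1)" "k2 < length (M e2)" for e1 e2 k1 k2
    using interval[of e1 e2 k1 k2] that b\<sigma> by simp
  have b3: "before \<sigma> e1 e2" if "e1 \<in> S" "e2 \<in> S" "e1 \<noteq> e2" "before \<tau> (e1, k1) (e2, k2)"
     "k1 < length (M e1)" "k2 < length (M e2)" for e1 e2 k1 k2
  proof (rule ccontr)
    assume "\<not> before \<sigma> e1 e2"
    then have "before \<sigma> e2 e1" using before_total[of e1 \<sigma> e2] that s\<sigma> by auto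
    then have "before \<tau> (e2, k2) (e1, k1)" using b2[of e2 e1 k2 k1] that by auto
    then show False using before_asym[OF dt] that by blast
  qed
  have scpo: "\<forall>(a, b)\<in>po. before \<sigma> a b"
  proof (clarify)
    fix a b assume p: "(a, b) \<in> po"
    have ab: "a \<in> S" "b \<in> S" using po_sub[OF p] by auto
    have "0 < length (M a)" "0 < length (M b)" using ab len_ge2[of a] len_ge2[of b] by auto
    then have "((a, 0), (b, 0)) \<in> PO" using p ab by (simp add: po'_def S'_def)
    then have "((a, 0), (b, 0)) \<in> po_of TH \<tau>" using pot by simp
    then have "before \<tau> (a, 0) (b, 0)" by (simp add: po_of_before)
    then show "before \<sigma> a b" using b\<sigma> by simp
  qed
  have scrd: "before \<sigma> (rf r) r \<and>
           (\<forall>w\<in>S. is_wr (lab w) \<and> regof (lab w) = regof (lab r) \<and> w \<noteq> rf r \<longrightarrow>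
              \<not> (before \<sigma> (rf r) w \<and> before \<sigma> w r))" if rS: "r \<in> S" and rn: "\<not> is_wr (lab r)" for r
  proof -
    define w where "w = rf r"
    have wS: "w \<in> S" and ww: "is_wr (lab w)" and wx: "regof (lab w) = regof (lab r)"
      using read_ok[OF rS rn] by (simp_all add: w_def)
    define x where "x = regof (lab w)"
    have x: "lab w = Wr x" using wr_lab[OF ww] by (simp add: x_def)
    have rRD: "r \<in> RD w" using rS rn by (simp add: RD_iff w_def)
    define j where "j = idx r"
    have jr: "1 \<le> j" "j \<le> card (RD w)" using idx_range[OF wS ww rRD] by (simp_all add: j_def)
    have pm: "card (RD w) \<le> mr x" using p_le_m[OF wS x] .
    have "((w, j), (r, 1)) \<in> RF" using wS ww rRD unfolding RF_iff j_def by blast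
    then have "((w, j), (r, 1)) \<in> rf_of OP CH \<tau>" using rft by simp
    note g = G1[OF dt wf this]
    have lw: "length (M w) = mr x + (mr x - card (RD w)) + 2" using M_wr_len[OF wS x] .
    have jl: "j < length (M w)" using jr pm lw by simp
    have chw: "CH (w, j) = Cch x j" using M_wr_nth[OF wS x jl] jr pm by (simp add: CH_eq)
    have wr: "w \<noteq> r" using ww rn by auto
    have rl: "1 < length (M r)" using len_ge2[OF rS] by simp
    have bwr: "before \<sigma> w r" using b3[OF wS rS wr _ jl rl] g by simp
    have nb: "\<not> (before \<sigma> w w2 \<and> before \<sigma> w2 r)"
      if w2: "w2 \<in> S" "is_wr (lab w2)" "regof (lab w2) = regof (lab r)" "w2 \<noteq> w" for w2
    proof
      assume a: "before \<sigma> w w2 \<and> before \<sigma> w2 r"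
      have x2: "lab w2 = Wr x" using wr_lab[OF w2(2)] w2(3) wx by (simp add: x_def)
      have l2: "length (M w2) = mr x + (mr x - card (RD w2)) + 2" using M_wr_len[OF w2(1) x2] .
      have jl2: "j < length (M w2)" using jr pm l2 by simp
      have ch2: "CH (w2, j) = Cch x j" using M_wr_nth[OF w2(1) x2 jl2] jr pm by (simp add: CH_eq)
      have w2r: "w2 \<noteq> r" using w2(2) rn by auto
      have "before \<tau> (w, j) (w2, j)" using b2[OF wS w2(1) _ _ jl jl2] w2(4) a by auto
      moreover have "before \<tau> (w2, j) (r, 1)" using b2[OF w2(1) rS w2r _ jl2 rl] a by auto
      ultimately show False using g ch2 chw by auto
    qed
    show ?thesis using bwr nb wx by (simp add: w_def)
  qed
  have "sc_ord \<sigma>" unfolding sc_ord_def using d\<sigma> s\<sigma> scpo scrd by blast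
  then show ?thesis by blast
qed

theorem main: "seq_consistent S po lab rf \<longleftrightarrow> vch_consistent SS PO (\<lambda>_. 1) TH OP CH RF"
  using dir1 dir2 sc_iff by blast

end

theorem mainTheorem13:
  fixes S :: "'e set" and po :: "('e \<times> 'e) set" and thr :: "'e \<Rightarrow> 't"
    and lab :: "'e \<Rightarrow> 'x acc" and rf :: "'e \<Rightarrow> 'e" and idx :: "'e \<Rightarrow> nat"
  assumes "vsc_instance S po thr lab rf"
    and "valid_enum S lab rf idx"
  shows "seq_consistent S po lab rf \<longleftrightarrow>
         vch_consistent (S' S lab rf idx) (po' S po lab rf idx) (\<lambda>_ :: 'x chan. 1 :: nat)
           (thr' thr) (op' S lab rf idx) (ch' S lab rf idx) (rf' S lab rf idx)"
proof -
  interpret setting S po thr lab rf idx using assms by unfold_locales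
  show ?thesis by (rule main)
qed

end
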